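(* Let $\Gamma$ be a Jordan curve in $\mathbb{C}$ and let $D$ be the bounded open region enclosed by $\Gamma$. Let $f$ be a non-constant function analytic on an open set containing the closure $\overline{D} = D \cup \Gamma$, and suppose there is a constant $C$ such that $|f(z)| = C$ for every $z \in \Gamma$. Let $N(f)$ denote the number of zeros of $f$ in $D$ and $N(f')$ the number of zeros of the derivative $f'$ in $D$, both counted according to multiplicity. Then $$N(f) = N(f') + 1.$$
   Context: Zeros are counted with multiplicity: a zero $z_0$ of an analytic function $g$ has multiplicity $k$ if $g(z_0)=g'(z_0)=\dots=g^{(k-1)}(z_0)=0$ and $g^{(k)}(z_0)\neq 0$. *)

theory Defs
  imports "HOL-Analysis.Analysis"
begin

definition zero_multiplicity :: "(complex \<Rightarrow> complex) \<Rightarrow> complex \<Rightarrow> nat" where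
  "zero_multiplicity g z0 = (LEAST k. (deriv ^^ k) g z0 \<noteq> 0)"

definition num_zeros :: "(complex \<Rightarrow> complex) \<Rightarrow> complex set \<Rightarrow> nat" where
  "num_zeros g A = (\<Sum>z\<in>{z\<in>A. g z = 0}. zero_multiplicity g z)"

end

theory Submission
  imports Defs "HOL-Complex_Analysis.Complex_Analysis"
begin


lemma zm_zorder:
  assumes hol: "g holomorphic_on S" and S: "open S" "connected S" "z \<in> S"
    and nz: "\<exists>w\<in>S. g w \<noteq> 0"
  shows "zorder g z = int (zero_multiplicity g z)"
proof -
  have ex: "\<exists>k. (deriv ^^ k) g z \<noteq> 0"
  proof (rule ccontr)
    assume "\<not> ?thesis"
    then have "\<And>n. (deriv ^^ n) g z = 0" by blast
    then have "\<And>w. w \<in> S \<Longrightarrow> g w = 0"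
      using holomorphic_fun_eq_0_on_connected[OF hol S(1,2)] S(3) by blast
    with nz show False by blast
  qed
  define k where "k = zero_multiplicity g z"
  have k: "k = (LEAST k. (deriv ^^ k) g z \<noteq> 0)" by (simp add: k_def zero_multiplicity_def)
  have "zorder g z = int k"
  proof (rule zorder_zero_eqI[OF hol S(1,3)])
    show "\<And>i. i < nat (int k) \<Longrightarrow> (deriv ^^ i) g z = 0"
      using k not_less_Least by fastforce
    show "(deriv ^^ nat (int k)) g z \<noteq> 0"
      using k LeastI_ex[OF ex] by simp
  qed auto
  then show ?thesis by (simp add: k_def)
qed

lemma zm_cong:
  assumes "eventually (\<lambda>x. f x = g x) (nhds z)"
  shows "zero_multiplicity f z = zero_multiplicity g z"
  unfolding zero_multiplicity_def using higher_deriv_cong_ev[OF assms refl] by simp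



abbreviation bdry :: "complex filter" where "bdry \<equiv> filtercomap norm (at_left 1)"

lemma ev_bdry: "eventually P bdry \<longleftrightarrow> (\<exists>\<rho><1. \<forall>z. \<rho> < norm z \<longrightarrow> norm z < 1 \<longrightarrow> P z)"
  unfolding eventually_filtercomap eventually_at_left_field
  apply safe
  subgoal for Q \<rho> by blast
  subgoal for \<rho>
    by (rule exI[of _ "\<lambda>x. \<rho> < x \<and> x < 1"]) auto
  done

lemma max_disc:
  assumes hol: "h holomorphic_on ball 0 1" and lim: "((\<lambda>z. norm (h z)) \<longlongrightarrow> M) bdry"
    and z: "z \<in> ball 0 1"
  shows "norm (h z) \<le> M"
proof (rule field_le_epsilon)
  fix e :: real assume e: "e > 0"
  have "eventually (\<lambda>w. norm (h w) < M + e) bdry"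
    using order_tendstoD(2)[OF lim, of "M + e"] e by simp
  then obtain \<rho> where \<rho>: "\<rho> < 1" "\<And>w. \<rho> < norm w \<Longrightarrow> norm w < 1 \<Longrightarrow> norm (h w) < M + e"
    unfolding ev_bdry by blast
  define m where "m = max \<rho> (norm z)"
  define r where "r = (m + 1) / 2"
  have z0: "0 \<le> norm z" "norm z < 1" using z by auto
  have m: "m \<ge> norm z" "m \<ge> \<rho>" "m < 1" using z0 \<rho>(1) by (auto simp: m_def)
  have r1: "r < 1" using m z0 unfolding r_def by (simp add: field_simps)
  have r2: "\<rho> < r" using m z0 unfolding r_def by (simp add: field_simps)
  have r3: "norm z < r" using m z0 unfolding r_def by (simp add: field_simps)
  have m0: "0 \<le> m" using m(1) norm_ge_zero order_trans by blast
  have r4: "0 < r" using m0 unfolding r_def by (simp add: field_simps)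
  note r = r1 r2 r3 r4
  show "norm (h z) \<le> M + e"
  proof (rule maximum_modulus_frontier[of h "ball 0 r"])
    show "h holomorphic_on interior (ball 0 r)"
      using hol r by (auto intro: holomorphic_on_subset)
    show "continuous_on (closure (ball 0 r)) h"
      using r by (intro holomorphic_on_imp_continuous_on holomorphic_on_subset[OF hol]) auto
    show "\<And>w. w \<in> frontier (ball 0 r) \<Longrightarrow> norm (h w) \<le> M + e"
      using r \<rho> by (auto simp: frontier_ball less_imp_le)
  qed (use r in auto)
qed

lemma const_base:
  assumes hol: "h holomorphic_on ball 0 1" and lim: "((\<lambda>z. norm (h z)) \<longlongrightarrow> C) bdry"
    and nz: "\<And>z. z \<in> ball 0 1 \<Longrightarrow> h z \<noteq> 0"
  shows "\<exists>c. c \<noteq> 0 \<and> (\<forall>z\<in>ball 0 1. h z = c)"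
proof -
  have b0: "0 \<in> ball (0::complex) 1" by simp
  have C: "C > 0"
    using max_disc[OF hol lim b0] nz[OF b0] by (metis less_le_trans zero_less_norm_iff)
  have hol': "(\<lambda>z. inverse (h z)) holomorphic_on ball 0 1"
    using hol nz by (intro holomorphic_intros) auto
  have lim': "((\<lambda>z. norm (inverse (h z))) \<longlongrightarrow> inverse C) bdry"
    unfolding norm_inverse using C by (intro tendsto_inverse lim) auto
  have le: "norm (h z) \<le> C" if "z \<in> ball 0 1" for z using max_disc[OF hol lim that] .
  have ge: "norm (h z) \<ge> C" if "z \<in> ball 0 1" for z
  proof -
    have "inverse (norm (h z)) \<le> inverse C"
      using max_disc[OF hol' lim' that] by (simp add: norm_inverse)
    then show ?thesis using nz[OF that] C by (simp add: inverse_le_iff_le)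
  qed
  have "h constant_on ball 0 1"
    by (rule maximum_modulus_principle[OF hol _ _ _ _ centre_in_ball[THEN iffD2, OF zero_less_one]])
       (use le ge b0 in \<open>auto intro: order_trans[OF _ ge[OF b0]]\<close>)
  then obtain c where "\<And>z. z \<in> ball 0 1 \<Longrightarrow> h z = c" unfolding constant_on_def by blast
  then show ?thesis using nz[of 0] by auto
qed



definition bf :: "complex \<Rightarrow> complex \<Rightarrow> complex" where
  "bf a z = (z - a) / (1 - cnj a * z)"

lemma moeb_ident:
  "norm (1 - cnj a * z)^2 - norm (z - a)^2 = (1 - norm a^2) * (1 - norm z^2)"
  unfolding cmod_power2 by (simp add: algebra_simps power2_eq_square)

lemma moeb_den_ge:
  assumes "norm a < 1" "norm z \<le> 1"
  shows "norm (1 - cnj a * z) \<ge> 1 - norm a"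
proof -
  have "norm (cnj a * z) \<le> norm a" using assms by (simp add: norm_mult mult_left_le)
  moreover have "1 - norm (cnj a * z) \<le> norm (1 - cnj a * z)"
    using norm_triangle_ineq2[of 1 "cnj a * z"] by simp
  ultimately show ?thesis by linarith
qed

lemma moeb_tendsto:
  assumes a: "norm a < 1"
  shows "((\<lambda>z. norm (bf a z)) \<longlongrightarrow> 1) bdry"
proof -
  define K where "K = 2 * (1 + norm a) / (1 - norm a)"
  have K: "K \<ge> 0" using a by (simp add: K_def)
  have "eventually (\<lambda>z. norm (norm (bf a z) - 1) \<le> K * (1 - norm z)) bdry"
    unfolding ev_bdry
  proof (rule exI[of _ "0::real"], intro conjI zero_less_one allI impI)
    fix z :: complex assume z: "0 < norm z" "norm z < 1"
    define d where "d = norm (1 - cnj a * z)"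
    define n where "n = norm (z - a)"
    have d: "d \<ge> 1 - norm a" using moeb_den_ge[OF a] z by (simp add: d_def)
    have dpos: "d > 0" using d a by linarith
    have id: "d^2 - n^2 = (1 - norm a^2) * (1 - norm z^2)"
      using moeb_ident[of a z] by (simp add: d_def n_def)
    have n0: "n \<ge> 0" by (simp add: n_def)
    have p1: "(1 - norm a^2) * (1 - norm z^2) \<ge> 0"
      using a z by (intro mult_nonneg_nonneg) (auto simp: abs_square_le_1)
    have nd: "n \<le> d"
    proof -
      have "n^2 \<le> d^2" using id p1 by linarith
      then show ?thesis using n0 dpos by (simp add: power_mono_iff abs_le_square_iff)
    qed
    have b: "norm (bf a z) = n / d" by (simp add: bf_def norm_divide n_def d_def)
    have "norm (n / d - 1) = (d - n) / d" using nd dpos by (simp add: field_simps)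
    also have "\<dots> \<le> (d^2 - n^2) / d^2"
    proof -
      have "(d - n) * d \<le> (d - n) * (d + n)" using nd n0 by (intro mult_left_mono) auto
      then show ?thesis using dpos by (simp add: field_simps power2_eq_square)
    qed
    also have "\<dots> = (1 - norm a^2) * (1 - norm z^2) / d^2" using id by simp
    also have "\<dots> \<le> (1 - norm a^2) * (1 - norm z^2) / (1 - norm a)^2"
      using p1 d a by (intro divide_left_mono mult_pos_pos power_mono) auto
    also have "\<dots> = (1 + norm a) * (1 + norm z) * (1 - norm z) / (1 - norm a)"
    proof -
      have e: "(1 - x^2) * (1 - y^2) / (1 - x)^2 = (1 + x) * (1 + y) * (1 - y) / (1 - x)"
        if "x < 1" for x y :: real
      proof -
        have "1 - x^2 = (1 + x) * (1 - x)" "1 - y^2 = (1 + y) * (1 - y)"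
          by (simp_all add: algebra_simps power2_eq_square)
        then show ?thesis using that by (simp add: power2_eq_square)
      qed
      show ?thesis using e[OF a] .
    qed
    also have "\<dots> \<le> (1 + norm a) * 2 * (1 - norm z) / (1 - norm a)"
      using a z by (intro divide_right_mono mult_right_mono mult_left_mono) auto
    also have "\<dots> = K * (1 - norm z)" by (simp add: K_def)
    finally show "norm (norm (bf a z) - 1) \<le> K * (1 - norm z)" by (simp add: b)
  qed
  moreover have "((\<lambda>z. K * (1 - norm z)) \<longlongrightarrow> 0) bdry"
  proof -
    have "filterlim norm (at_left 1) bdry" by (rule filterlim_filtercomap)
    then have "((\<lambda>z. norm z) \<longlongrightarrow> 1) bdry"
      using filterlim_mono[OF _ at_within_le_nhds order_refl] by blast
    then have "((\<lambda>z. K * (1 - norm z)) \<longlongrightarrow> K * (1 - 1)) bdry"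
      by (intro tendsto_mult tendsto_diff tendsto_const)
    then show ?thesis by simp
  qed
  ultimately have "((\<lambda>z. norm (bf a z) - 1) \<longlongrightarrow> 0) bdry"
    by (rule Lim_null_comparison)
  then show ?thesis by (simp add: LIM_zero_iff)
qed



definition Pd :: "(complex \<Rightarrow> complex) \<Rightarrow> real \<Rightarrow> bool" where
  "Pd h C \<longleftrightarrow> h holomorphic_on ball 0 1 \<and> ((\<lambda>z. norm (h z)) \<longlongrightarrow> C) bdry \<and> (\<exists>z\<in>ball 0 1. h z \<noteq> 0)"

definition Zs :: "(complex \<Rightarrow> complex) \<Rightarrow> complex set" where
  "Zs h = {z\<in>ball 0 1. h z = 0}"

definition mu :: "(complex \<Rightarrow> complex) \<Rightarrow> nat" where
  "mu h = (\<Sum>z\<in>Zs h. nat (zorder h z))"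

lemma Pd_C: assumes "Pd h C" shows "C > 0"
proof -
  from assms obtain w where w: "w \<in> ball 0 1" "h w \<noteq> 0" and hol: "h holomorphic_on ball 0 1"
    and lim: "((\<lambda>z. norm (h z)) \<longlongrightarrow> C) bdry" unfolding Pd_def by blast
  show ?thesis using max_disc[OF hol lim w(1)] w(2) by (metis less_le_trans zero_less_norm_iff)
qed

lemma Pd_finite: assumes "Pd h C" shows "finite (Zs h)"
proof -
  from assms obtain w where w: "w \<in> ball 0 1" "h w \<noteq> 0" and hol: "h holomorphic_on ball 0 1"
    and lim: "((\<lambda>z. norm (h z)) \<longlongrightarrow> C) bdry" unfolding Pd_def by blast
  have C: "C > 0" using Pd_C[OF assms] .
  have "eventually (\<lambda>z. norm (h z) > C / 2) bdry"
    using order_tendstoD(1)[OF lim, of "C/2"] C by simp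
  then obtain \<rho> where \<rho>: "\<rho> < 1" "\<And>z. \<rho> < norm z \<Longrightarrow> norm z < 1 \<Longrightarrow> norm (h z) > C / 2"
    unfolding ev_bdry by blast
  define \<rho>' where "\<rho>' = max \<rho> 0"
  have sub: "Zs h \<subseteq> {z \<in> cball 0 \<rho>'. h z = 0}"
  proof
    fix z assume "z \<in> Zs h"
    then have z: "norm z < 1" "h z = 0" by (auto simp: Zs_def)
    have "\<not> \<rho> < norm z" using \<rho>(2)[of z] z C by auto
    then show "z \<in> {z \<in> cball 0 \<rho>'. h z = 0}" using z by (auto simp: \<rho>'_def)
  qed
  show ?thesis
  proof (cases "h constant_on ball 0 1")
    case True
    then obtain c where c: "\<And>z. z \<in> ball 0 1 \<Longrightarrow> h z = c" unfolding constant_on_def by blast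
    then have "Zs h = {}" using w by (auto simp: Zs_def)
    then show ?thesis by simp
  next
    case False
    have "finite {z \<in> cball 0 \<rho>'. h z = 0}"
      by (rule holomorphic_compact_finite_zeros[OF hol _ _ _ _ False])
         (use \<rho> in \<open>auto simp: \<rho>'_def\<close>)
    then show ?thesis using sub finite_subset by blast
  qed
qed

lemma den_nz: assumes "norm a * norm z < 1" shows "1 - cnj a * z \<noteq> 0"
proof
  assume "1 - cnj a * z = 0"
  then have "norm (cnj a * z) = 1" by (metis eq_iff_diff_eq_0 norm_one)
  then show False using assms by (simp add: norm_mult)
qed

lemma den_nz1: assumes "norm a < 1" "norm z < 1" shows "1 - cnj a * z \<noteq> 0"
proof (rule den_nz)
  have "norm a * norm z \<le> norm a" using assms by (simp add: mult_left_le)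
  then show "norm a * norm z < 1" using assms by linarith
qed

lemma bf_hol: assumes "norm a < 1" shows "bf a holomorphic_on ball 0 1"
  unfolding bf_def using den_nz1[OF assms] by (intro holomorphic_intros) auto



lemma divide_step:
  assumes P: "Pd h C" and a: "a \<in> ball 0 1" "h a = 0"
  obtains g where "Pd g C" "\<And>z. z \<in> ball 0 1 \<Longrightarrow> h z = bf a z * g z" "mu h = Suc (mu g)"
proof -
  from P obtain w where w: "w \<in> ball 0 1" "h w \<noteq> 0" and hol: "h holomorphic_on ball 0 1"
    and lim: "((\<lambda>z. norm (h z)) \<longlongrightarrow> C) bdry" unfolding Pd_def by blast
  have an: "norm a < 1" using a by simp
  define q where "q = (\<lambda>z. if z = a then deriv h a else (h z - h a) / (z - a))"
  have qh: "q holomorphic_on ball 0 1" unfolding q_def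
    by (rule pole_lemma[OF hol]) (use a in auto)
  define g where "g = (\<lambda>z. q z * (1 - cnj a * z))"
  have gh: "g holomorphic_on ball 0 1" unfolding g_def by (intro holomorphic_intros qh)
  have eq: "h z = bf a z * g z" if "z \<in> ball 0 1" for z
  proof (cases "z = a")
    case True then show ?thesis using a by (simp add: bf_def)
  next
    case False
    have "1 - cnj a * z \<noteq> 0" using den_nz1[OF an] that by simp
    moreover have "z - a \<noteq> 0" using False by simp
    ultimately show ?thesis using a by (simp add: bf_def g_def q_def)
  qed
  have glim: "((\<lambda>z. norm (g z)) \<longlongrightarrow> C) bdry"
  proof -
    have "((\<lambda>z. norm (h z) / norm (bf a z)) \<longlongrightarrow> C / 1) bdry"
      by (intro tendsto_divide lim moeb_tendsto an) auto
    moreover have "eventually (\<lambda>z. norm (h z) / norm (bf a z) = norm (g z)) bdry"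
      unfolding ev_bdry
    proof (rule exI[of _ "norm a"], intro conjI an allI impI)
      fix z :: complex assume z: "norm a < norm z" "norm z < 1"
      then have "z \<noteq> a" by auto
      moreover have "1 - cnj a * z \<noteq> 0" using den_nz1[OF an z(2)] .
      ultimately have "bf a z \<noteq> 0" by (simp add: bf_def)
      then show "norm (h z) / norm (bf a z) = norm (g z)"
        using eq[of z] z by (simp add: norm_mult)
    qed
    ultimately show ?thesis by (simp add: tendsto_cong)
  qed
  have gnz: "g w \<noteq> 0" using eq[OF w(1)] w(2) by auto
  have Pg: "Pd g C" unfolding Pd_def using gh glim gnz w(1) by blast
  have bfh: "bf a holomorphic_on ball 0 1" using bf_hol[OF an] .
  have zo: "zorder h z = zorder (bf a) z + zorder g z" if z: "z \<in> ball 0 1" for z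
  proof -
    have ev: "eventually (\<lambda>x. h x = bf a x * g x) (at z)"
      using eq z by (intro eventually_at_in_open'[THEN eventually_mono, of "ball 0 1"]) auto
    have nz: "eventually (\<lambda>x. h x \<noteq> 0) (at z)"
      using non_zero_neighbour_alt[OF hol open_ball connected_ball z w] by (auto elim: eventually_mono)
    have "zorder h z = zorder (\<lambda>x. bf a x * g x) z" by (rule zorder_cong[OF ev refl])
    also have "\<dots> = zorder (bf a) z + zorder g z"
    proof (rule zorder_times_analytic)
      show "bf a analytic_on {z}" using bfh z analytic_on_open[of "ball 0 1"] by (meson analytic_on_subset empty_subsetI insert_subset open_ball)
      show "g analytic_on {z}" using gh z analytic_on_open[of "ball 0 1"] by (meson analytic_on_subset empty_subsetI insert_subset open_ball)
      show "\<forall>\<^sub>F z in at z. bf a z * g z \<noteq> 0" using ev nz by eventually_elim auto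
    qed
    finally show ?thesis .
  qed
  have zb: "zorder (bf a) z = (if z = a then 1 else 0)" if z: "z \<in> ball 0 1" for z
  proof (cases "z = a")
    case True
    have "zorder (bf a) a = 1"
    proof (rule simple_zeroI[of "ball 0 1" a "\<lambda>x. inverse (1 - cnj a * x)"])
      show "(\<lambda>x. inverse (1 - cnj a * x)) holomorphic_on ball 0 1"
        using den_nz1[OF an] by (intro holomorphic_intros) auto
      show "inverse (1 - cnj a * a) \<noteq> 0" using den_nz1[OF an an] by simp
      show "\<And>x. x \<in> ball 0 1 \<Longrightarrow> bf a x = inverse (1 - cnj a * x) * (x - a)"
        by (simp add: bf_def divide_inverse)
    qed (use a in auto)
    then show ?thesis using True by simp
  next
    case False
    have "bf a z \<noteq> 0" using False den_nz1[OF an] z by (simp add: bf_def)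
    then have "zorder (bf a) z = 0"
      by (intro zorder_eq_0I) (use bfh z analytic_on_open[of "ball 0 1"] in \<open>meson analytic_on_subset empty_subsetI insert_subset open_ball\<close>)
    then show ?thesis using False by simp
  qed
  have zg0: "zorder g z \<ge> 0" if z: "z \<in> ball 0 1" for z
  proof (rule zorder_ge_0)
    show "g analytic_on {z}" using gh z analytic_on_open[of "ball 0 1"] by (meson analytic_on_subset empty_subsetI insert_subset open_ball)
    have "eventually (\<lambda>x. g x \<noteq> 0) (at z)"
      using non_zero_neighbour_alt[OF gh open_ball connected_ball z w(1) gnz] by (auto elim: eventually_mono)
    then show "frequently (\<lambda>x. g x \<noteq> 0) (at z)" by (simp add: eventually_frequently)
  qed
  have finh: "finite (Zs h)" using Pd_finite[OF P] .
  have aZ: "a \<in> Zs h" using a by (simp add: Zs_def)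
  have sub: "Zs g \<subseteq> Zs h" using eq by (auto simp: Zs_def)
  have "mu h = (\<Sum>z\<in>Zs h. (if z = a then 1 else 0) + nat (zorder g z))"
    unfolding mu_def
  proof (rule sum.cong[OF refl])
    fix z assume "z \<in> Zs h"
    then have z: "z \<in> ball 0 1" by (simp add: Zs_def)
    show "nat (zorder h z) = (if z = a then 1 else 0) + nat (zorder g z)"
      using zo[OF z] zb[OF z] zg0[OF z] by auto
  qed
  also have "\<dots> = 1 + (\<Sum>z\<in>Zs h. nat (zorder g z))"
    using finh aZ by (simp add: sum.distrib)
  also have "(\<Sum>z\<in>Zs h. nat (zorder g z)) = mu g"
    unfolding mu_def
  proof (rule sum.mono_neutral_right[OF finh sub])
    show "\<forall>z\<in>Zs h - Zs g. nat (zorder g z) = 0"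
    proof
      fix z assume "z \<in> Zs h - Zs g"
      then have z: "z \<in> ball 0 1" "g z \<noteq> 0" by (auto simp: Zs_def)
      have "zorder g z = 0"
        by (intro zorder_eq_0I z(2)) (use gh z analytic_on_open[of "ball 0 1"] in \<open>meson analytic_on_subset empty_subsetI insert_subset open_ball\<close>)
      then show "nat (zorder g z) = 0" by simp
    qed
  qed
  finally have "mu h = Suc (mu g)" by simp
  with Pg eq show ?thesis using that by blast
qed



definition Qw :: "(complex \<Rightarrow> complex) \<Rightarrow> bool" where
  "Qw h \<longleftrightarrow> (\<exists>R>1. \<exists>H. H holomorphic_on ball 0 R \<and> (\<forall>z\<in>ball 0 1. H z = h z) \<and>
      (\<forall>z. norm z = 1 \<longrightarrow> H z \<noteq> 0 \<and> 0 \<le> Re (z * deriv H z / H z)))"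

definition Qs :: "(complex \<Rightarrow> complex) \<Rightarrow> bool" where
  "Qs h \<longleftrightarrow> (\<exists>R>1. \<exists>H. H holomorphic_on ball 0 R \<and> (\<forall>z\<in>ball 0 1. H z = h z) \<and>
      (\<forall>z. norm z = 1 \<longrightarrow> H z \<noteq> 0 \<and> 0 < Re (z * deriv H z / H z)))"

lemma Qs_Qw: "Qs h \<Longrightarrow> Qw h"
  unfolding Qs_def Qw_def by (meson less_imp_le)

lemma bf_deriv:
  assumes "1 - cnj a * z \<noteq> 0"
  shows "(bf a has_field_derivative (1 - cnj a * a) / (1 - cnj a * z)^2) (at z)"
  unfolding bf_def
  by (rule derivative_eq_intros refl | use assms in \<open>simp add: field_simps power2_eq_square\<close>)+

lemma bf_key:
  assumes a: "norm a < 1" and z: "norm z = 1"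
  shows "z * ((1 - cnj a * a) / (1 - cnj a * z)^2) / bf a z = of_real ((1 - norm a^2) / norm (z - a)^2)"
proof -
  have zc: "z * cnj z = 1" using z complex_norm_square[of z] by simp
  have za: "z - a \<noteq> 0" using a z by auto
  have d: "1 - cnj a * z = z * cnj (z - a)" using zc by (simp add: algebra_simps)
  have dn: "1 - cnj a * z \<noteq> 0" using den_nz[of a z] a z by simp
  have z0: "z \<noteq> 0" using z by auto
  define c where "c = 1 - cnj a * a"
  define e where "e = 1 - cnj a * z"
  have "z * (c / e^2) / bf a z = z * c / (e * (z - a))"
    using za dn unfolding bf_def e_def[symmetric] by (simp add: field_simps power2_eq_square)
  also have "\<dots> = z * c / (z * cnj (z - a) * (z - a))" using d by (simp add: e_def)
  also have "\<dots> = c / ((z - a) * cnj (z - a))"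
    using mult_divide_mult_cancel_left[OF z0, of c "(z - a) * cnj (z - a)"]
    by (simp add: ac_simps)
  finally have fin: "z * ((1 - cnj a * a) / (1 - cnj a * z)^2) / bf a z
        = (1 - cnj a * a) / ((z - a) * cnj (z - a))" by (simp add: c_def e_def)
  have h1: "1 - cnj a * a = complex_of_real (1 - norm a^2)"
    using complex_norm_square[of a] by (simp add: mult.commute)
  have h2: "(z - a) * cnj (z - a) = complex_of_real (norm (z - a)^2)"
    using complex_norm_square[of "z - a"] by simp
  show ?thesis using fin unfolding h1 h2 by (simp only: of_real_divide)
qed

lemma alg1:
  fixes B G z G1 D :: complex
  assumes "B \<noteq> 0" "G \<noteq> 0"
  shows "z * (B * G1 + D * G) / (B * G) = z * D / B + z * G1 / G"
  using assms by (simp add: field_simps)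

lemma combine:
  assumes a: "norm a < 1" and Q: "Qw g" and eq: "\<And>z. z \<in> ball 0 1 \<Longrightarrow> h z = bf a z * g z"
  shows "Qs h"
proof -
  from Q obtain R G where R: "R > 1" and G: "G holomorphic_on ball 0 R"
    and Gg: "\<forall>z\<in>ball 0 1. G z = g z"
    and Gs: "\<And>z. norm z = 1 \<Longrightarrow> G z \<noteq> 0 \<and> 0 \<le> Re (z * deriv G z / G z)"
    unfolding Qw_def by blast
  define R' where "R' = min R (2 / (1 + norm a))"
  have p: "0 < 1 + norm a" by (smt (verit) norm_ge_zero)
  have "1 < 2 / (1 + norm a)" using a p by (simp add: less_divide_eq)
  then have R': "R' > 1" using R by (auto simp: R'_def)
  have small: "norm a * norm z < 1" if "norm z < R'" for z
  proof (cases "a = 0")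
    case True then show ?thesis by simp
  next
    case False
    have "norm a * norm z < norm a * (2 / (1 + norm a))"
      using that False by (intro mult_strict_left_mono) (auto simp: R'_def)
    also have "\<dots> \<le> 1" using a p by (simp add: divide_le_eq)
    finally show ?thesis .
  qed
  define H where "H = (\<lambda>z. bf a z * G z)"
  have bfh: "bf a holomorphic_on ball 0 R'"
    unfolding bf_def using small den_nz by (intro holomorphic_intros) auto
  have GR: "G holomorphic_on ball 0 R'"
    by (rule holomorphic_on_subset[OF G]) (auto simp: R'_def)
  have Hh: "H holomorphic_on ball 0 R'" unfolding H_def by (intro holomorphic_intros bfh GR)
  have HE: "\<forall>z\<in>ball 0 1. H z = h z" using eq Gg by (simp add: H_def)
  have Hs: "H z \<noteq> 0 \<and> 0 < Re (z * deriv H z / H z)" if z: "norm z = 1" for z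
  proof -
    have zR: "z \<in> ball 0 R'" using z R' by simp
    have "norm z < R'" using z R' by simp
    then have dn: "1 - cnj a * z \<noteq> 0" using den_nz small by blast
    have bz: "bf a z \<noteq> 0" using a z dn by (auto simp: bf_def)
    have Gz: "G z \<noteq> 0" using Gs[OF z] by simp
    have dG: "(G has_field_derivative deriv G z) (at z)"
      using holomorphic_derivI[OF GR open_ball zR] .
    have "(H has_field_derivative bf a z * deriv G z + (1 - cnj a * a) / (1 - cnj a * z)^2 * G z) (at z)"
      unfolding H_def by (rule DERIV_mult'[OF bf_deriv[OF dn] dG])
    then have dH: "deriv H z = bf a z * deriv G z + (1 - cnj a * a) / (1 - cnj a * z)^2 * G z"
      by (rule DERIV_imp_deriv)
    have "z * deriv H z / H z = z * ((1 - cnj a * a) / (1 - cnj a * z)^2) / bf a z + z * deriv G z / G z"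
      unfolding dH unfolding H_def by (rule alg1[OF bz Gz])
    also have "\<dots> = of_real ((1 - norm a^2) / norm (z - a)^2) + z * deriv G z / G z"
      using bf_key[OF a z] by simp
    finally have "Re (z * deriv H z / H z) = (1 - norm a^2) / norm (z - a)^2 + Re (z * deriv G z / G z)"
      by simp
    moreover have "(1 - norm a^2) / norm (z - a)^2 > 0"
    proof -
      have "z \<noteq> a" using a z by auto
      moreover have "norm a^2 < 1" using a by (simp add: power_less_one_iff abs_square_less_1)
      ultimately show ?thesis by simp
    qed
    ultimately show ?thesis using Gs[OF z] bz Gz by (simp add: H_def)
  qed
  show ?thesis unfolding Qs_def using R' Hh HE Hs by blast
qed

lemma Qw_induct: "Pd h C \<Longrightarrow> mu h = n \<Longrightarrow> Qw h"
proof (induction n arbitrary: h)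
  case (0 h)
  have base: "Qw h" if "Zs h = {}"
  proof -
    from 0 have hol: "h holomorphic_on ball 0 1" and lim: "((\<lambda>z. norm (h z)) \<longlongrightarrow> C) bdry"
      unfolding Pd_def by blast+
    have "\<And>z. z \<in> ball 0 1 \<Longrightarrow> h z \<noteq> 0" using that by (auto simp: Zs_def)
    from const_base[OF hol lim this] obtain c where c: "c \<noteq> 0" "\<forall>z\<in>ball 0 1. h z = c"
      by blast
    show ?thesis unfolding Qw_def
      by (rule exI[of _ 2], rule conjI, simp, rule exI[of _ "\<lambda>_. c"]) (use c in auto)
  qed
  show ?case
  proof (cases "Zs h = {}")
    case True then show ?thesis using base by blast
  next
    case False
    then obtain a where "a \<in> ball 0 1" "h a = 0" by (auto simp: Zs_def)
    from divide_step[OF 0(1) this] obtain g where "mu h = Suc (mu g)" by blast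
    then show ?thesis using 0(2) by simp
  qed
next
  case (Suc n h)
  show ?case
  proof (cases "Zs h = {}")
    case True
    from Suc have hol: "h holomorphic_on ball 0 1" and lim: "((\<lambda>z. norm (h z)) \<longlongrightarrow> C) bdry"
      unfolding Pd_def by blast+
    have "\<And>z. z \<in> ball 0 1 \<Longrightarrow> h z \<noteq> 0" using True by (auto simp: Zs_def)
    from const_base[OF hol lim this] obtain c where c: "c \<noteq> 0" "\<forall>z\<in>ball 0 1. h z = c"
      by blast
    show ?thesis unfolding Qw_def
      by (rule exI[of _ 2], rule conjI, simp, rule exI[of _ "\<lambda>_. c"]) (use c in auto)
  next
    case False
    then obtain a where a: "a \<in> ball 0 1" "h a = 0" by (auto simp: Zs_def)
    from divide_step[OF Suc(2) this] obtain g where g: "Pd g C"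
      "\<And>z. z \<in> ball 0 1 \<Longrightarrow> h z = bf a z * g z" "mu h = Suc (mu g)" by blast
    have "Qw g" using Suc.IH[OF g(1)] g(3) Suc(3) by simp
    then show ?thesis using combine[OF _ _ g(2)] a Qs_Qw by auto
  qed
qed

lemma disc_Qs:
  assumes P: "Pd h C" and nc: "\<not> h constant_on ball 0 1"
  shows "Qs h"
proof -
  from P have hol: "h holomorphic_on ball 0 1" and lim: "((\<lambda>z. norm (h z)) \<longlongrightarrow> C) bdry"
    unfolding Pd_def by blast+
  have "Zs h \<noteq> {}"
  proof
    assume "Zs h = {}"
    then have "\<And>z. z \<in> ball 0 1 \<Longrightarrow> h z \<noteq> 0" by (auto simp: Zs_def)
    from const_base[OF hol lim this] obtain c where "\<forall>z\<in>ball 0 1. h z = c"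
      by blast
    then show False using nc unfolding constant_on_def by blast
  qed
  then obtain a where a: "a \<in> ball 0 1" "h a = 0" by (auto simp: Zs_def)
  from divide_step[OF P this] obtain g where g: "Pd g C"
    "\<And>z. z \<in> ball 0 1 \<Longrightarrow> h z = bf a z * g z" by blast
  show ?thesis using combine[OF _ Qw_induct[OF g(1) refl] g(2)] a by simp
qed



lemma Ln_comp_deriv:
  assumes "(q has_field_derivative q') (at x)" "0 < Re (q x)"
  shows "((\<lambda>z. Ln (q z)) has_field_derivative inverse (q x) * q') (at x)"
proof -
  have "q x \<notin> \<real>\<^sub>\<le>\<^sub>0" using assms(2) by (auto simp: complex_nonpos_Reals_iff)
  from DERIV_chain2[OF has_field_derivative_Ln[OF this] assms(1)] show ?thesis by simp
qed

lemma count_Qs: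
  assumes hol: "h holomorphic_on ball 0 1" and Q: "Qs h"
  shows "num_zeros h (ball 0 1) = num_zeros (deriv h) (ball 0 1) + 1"
proof -
  from Q obtain R H where R: "R > 1" and HR: "H holomorphic_on ball 0 R"
    and Hh: "\<forall>z\<in>ball 0 1. H z = h z"
    and Hs: "\<And>z. norm z = 1 \<Longrightarrow> H z \<noteq> 0 \<and> 0 < Re (z * deriv H z / H z)"
    unfolding Qs_def by blast
  define \<phi> where "\<phi> = (\<lambda>z. z * deriv H z / H z)"
  define U where "U = ball 0 R \<inter> H -` (-{0})"
  define T where "T = U \<inter> \<phi> -` {w. 0 < Re w}"
  have dHR: "deriv H holomorphic_on ball 0 R" by (rule holomorphic_deriv[OF HR open_ball])
  have oU: "open U" unfolding U_def
    by (intro continuous_open_preimage holomorphic_on_imp_continuous_on HR open_ball open_Compl closed_singleton)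
  have UR: "U \<subseteq> ball 0 R" by (auto simp: U_def)
  have "\<phi> holomorphic_on U" unfolding \<phi>_def
    using holomorphic_on_subset[OF HR UR] holomorphic_on_subset[OF dHR UR]
    by (intro holomorphic_intros) (use oU in \<open>auto simp: U_def\<close>)
  then have oT: "open T" unfolding T_def
    by (intro continuous_open_preimage holomorphic_on_imp_continuous_on oU open_halfspace_Re_gt)
  have sphT: "sphere 0 1 \<subseteq> T" using Hs R by (auto simp: T_def U_def \<phi>_def)
  obtain \<delta>0 where \<delta>0: "\<delta>0 > 0" "(\<Union>x\<in>sphere 0 1. ball x \<delta>0) \<subseteq> T"
    using compact_subset_open_imp_ball_epsilon_subset[OF compact_sphere oT sphT] by blast
  define \<delta> where "\<delta> = min \<delta>0 (1/2)"
  have \<delta>: "\<delta> > 0" "\<delta> < 1" "\<delta> \<le> \<delta>0" using \<delta>0 by (auto simp: \<delta>_def)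
  have annT: "z \<in> T" if "1 - \<delta> < norm z" "norm z < 1 + \<delta>" for z
  proof -
    have z0: "z \<noteq> 0" using that \<delta> by auto
    define u where "u = z / of_real (norm z)"
    have u: "u \<in> sphere 0 1" using z0 by (simp add: u_def norm_divide)
    have "dist u z = norm (z - u)" by (simp add: dist_norm norm_minus_commute)
    also have "z - u = of_real (norm z - 1) * u" using z0 by (simp add: u_def field_simps)
    also have "norm \<dots> = \<bar>norm z - 1\<bar>" using u by (simp only: norm_mult norm_of_real) simp
    finally have "dist u z < \<delta>0" using that \<delta> by (auto simp: abs_less_iff)
    then have "z \<in> ball u \<delta>0" by (simp add: mem_ball)
    then have "z \<in> (\<Union>x\<in>sphere 0 1. ball x \<delta>0)" by (rule UN_I[OF u])
    then show ?thesis using \<delta>0(2) by (rule subsetD[rotated])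
  qed
  have Tprops: "H z \<noteq> 0 \<and> deriv H z \<noteq> 0 \<and> z \<noteq> 0 \<and> 0 < Re (\<phi> z)" if "z \<in> T" for z
    using that by (auto simp: T_def U_def \<phi>_def)
  define R1 where "R1 = min R (1 + \<delta>)"
  have R1: "R1 > 1" "R1 \<le> R" "R1 \<le> 1 + \<delta>" using R \<delta> by (auto simp: R1_def)
  define S where "S = ball (0::complex) R1"
  have oS: "open S" and cS: "connected S" by (auto simp: S_def)
  have HS: "H holomorphic_on S" using HR R1 by (auto simp: S_def intro: holomorphic_on_subset)
  have dHS: "deriv H holomorphic_on S" using dHR R1 by (auto simp: S_def intro: holomorphic_on_subset)
  have ballS: "ball 0 1 \<subseteq> S" using R1 by (auto simp: S_def)
  have sphS: "sphere 0 1 \<subseteq> S" using R1 by (auto simp: S_def)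
  have outer: "z \<in> T" if "z \<in> S" "1 - \<delta> < norm z" for z
    using annT that R1 by (auto simp: S_def)
  define pz1 where "pz1 = {w\<in>S. H w = 0}"
  define pz2 where "pz2 = {w\<in>S. deriv H w = 0}"
  have pz1_sub: "pz1 \<subseteq> cball 0 (1 - \<delta>)"
    using outer Tprops by (force simp: pz1_def)
  have pz2_sub: "pz2 \<subseteq> cball 0 (1 - \<delta>)"
    using outer Tprops by (force simp: pz2_def)
  have cbS: "cball 0 (1 - \<delta>) \<subseteq> ball 0 1" using \<delta> by auto
  have one_T: "(1::complex) \<in> T" using sphT by auto
  have one_S: "(1::complex) \<in> S" using sphS by auto
  have H1: "H 1 \<noteq> 0" "deriv H 1 \<noteq> 0" using Tprops[OF one_T] by auto
  have Hnc: "\<not> H constant_on S"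
  proof
    assume "H constant_on S"
    then obtain c where c: "\<And>z. z \<in> S \<Longrightarrow> H z = c" unfolding constant_on_def by blast
    have "eventually (\<lambda>z. H z = c) (nhds 1)"
      using c oS one_S by (intro eventually_nhds_in_open[THEN eventually_mono, of S]) auto
    then have "deriv H 1 = deriv (\<lambda>_. c) 1" by (rule deriv_cong_ev) simp
    then show False using H1 by simp
  qed
  have fin1: "finite pz1"
  proof -
    have "finite {z \<in> cball 0 (1 - \<delta>). H z = 0}"
      by (rule holomorphic_compact_finite_zeros[OF HS oS cS compact_cball _ Hnc])
         (use cbS ballS in auto)
    moreover have "pz1 \<subseteq> {z \<in> cball 0 (1 - \<delta>). H z = 0}" using pz1_sub by (auto simp: pz1_def)
    ultimately show ?thesis using finite_subset by blast
  qed
  have fin2: "finite pz2"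
  proof (cases "deriv H constant_on S")
    case True
    then obtain c where c: "\<And>z. z \<in> S \<Longrightarrow> deriv H z = c" unfolding constant_on_def by blast
    then have "c \<noteq> 0" using H1 one_S by auto
    then have "pz2 = {}" using c by (auto simp: pz2_def)
    then show ?thesis by simp
  next
    case False
    have "finite {z \<in> cball 0 (1 - \<delta>). deriv H z = 0}"
      by (rule holomorphic_compact_finite_zeros[OF dHS oS cS compact_cball _ False])
         (use cbS ballS in auto)
    moreover have "pz2 \<subseteq> {z \<in> cball 0 (1 - \<delta>). deriv H z = 0}" using pz2_sub by (auto simp: pz2_def)
    ultimately show ?thesis using finite_subset by blast
  qed
  define \<gamma> where "\<gamma> = circlepath (0::complex) 1"
  have vp: "valid_path \<gamma>" and loop: "pathfinish \<gamma> = pathstart \<gamma>" and pim: "path_image \<gamma> = sphere 0 1"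
    by (auto simp: \<gamma>_def)
  have homo: "\<forall>z. z \<notin> S \<longrightarrow> winding_number \<gamma> z = 0"
  proof (intro allI impI)
    fix z assume "z \<notin> S"
    then have "z \<notin> cball 0 1" using R1 by (auto simp: S_def)
    then show "winding_number \<gamma> z = 0"
      by (intro winding_number_zero_outside[of _ "cball 0 1"]) (auto simp: \<gamma>_def valid_path_imp_path)
  qed
  have wind1: "winding_number \<gamma> p = 1" if "p \<in> cball 0 (1 - \<delta>)" for p
    using that \<delta> unfolding \<gamma>_def by (intro winding_number_circlepath) auto
  have evH: "eventually (\<lambda>x. H x = h x) (nhds p)" if "p \<in> ball 0 1" for p
    using Hh that by (intro eventually_nhds_in_open[THEN eventually_mono, of "ball 0 1"]) auto
  have dHh: "deriv H x = deriv h x" if "x \<in> ball 0 1" for x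
    by (rule deriv_cong_ev[OF evH[OF that] refl])
  have evdH: "eventually (\<lambda>x. deriv H x = deriv h x) (nhds p)" if "p \<in> ball 0 1" for p
    using dHh that by (intro eventually_nhds_in_open[THEN eventually_mono, of "ball 0 1"]) auto
  have pz1_eq: "pz1 = {z\<in>ball 0 1. h z = 0}"
    using pz1_sub cbS ballS Hh by (auto simp: pz1_def)
  have pz2_eq: "pz2 = {z\<in>ball 0 1. deriv h z = 0}"
    using pz2_sub cbS ballS dHh by (auto simp: pz2_def)
  have N1: "(\<Sum>p\<in>pz1. winding_number \<gamma> p * 1 * of_int (zorder H p)) = of_nat (num_zeros h (ball 0 1))"
  proof -
    have "(\<Sum>p\<in>pz1. winding_number \<gamma> p * 1 * of_int (zorder H p)) = (\<Sum>p\<in>pz1. of_nat (zero_multiplicity h p))"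
    proof (rule sum.cong[OF refl])
      fix p assume p: "p \<in> pz1"
      then have pb: "p \<in> ball 0 1" and pc: "p \<in> cball 0 (1 - \<delta>)" using pz1_sub cbS by auto
      have "zorder H p = int (zero_multiplicity H p)"
        by (rule zm_zorder[OF HS oS cS]) (use pb ballS one_S H1 in auto)
      also have "zero_multiplicity H p = zero_multiplicity h p" by (rule zm_cong[OF evH[OF pb]])
      finally show "winding_number \<gamma> p * 1 * of_int (zorder H p) = of_nat (zero_multiplicity h p)"
        using wind1[OF pc] by simp
    qed
    also have "\<dots> = of_nat (num_zeros h (ball 0 1))"
      by (simp add: num_zeros_def pz1_eq)
    finally show ?thesis .
  qed
  have N2: "(\<Sum>p\<in>pz2. winding_number \<gamma> p * 1 * of_int (zorder (deriv H) p)) = of_nat (num_zeros (deriv h) (ball 0 1))"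
  proof -
    have "(\<Sum>p\<in>pz2. winding_number \<gamma> p * 1 * of_int (zorder (deriv H) p)) = (\<Sum>p\<in>pz2. of_nat (zero_multiplicity (deriv h) p))"
    proof (rule sum.cong[OF refl])
      fix p assume p: "p \<in> pz2"
      then have pb: "p \<in> ball 0 1" and pc: "p \<in> cball 0 (1 - \<delta>)" using pz2_sub cbS by auto
      have "zorder (deriv H) p = int (zero_multiplicity (deriv H) p)"
        by (rule zm_zorder[OF dHS oS cS]) (use pb ballS one_S H1 in auto)
      also have "zero_multiplicity (deriv H) p = zero_multiplicity (deriv h) p" by (rule zm_cong[OF evdH[OF pb]])
      finally show "winding_number \<gamma> p * 1 * of_int (zorder (deriv H) p) = of_nat (zero_multiplicity (deriv h) p)"
        using wind1[OF pc] by simp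
    qed
    also have "\<dots> = of_nat (num_zeros (deriv h) (ball 0 1))"
      by (simp add: num_zeros_def pz2_eq)
    finally show ?thesis .
  qed
  have AP1: "contour_integral \<gamma> (\<lambda>x. deriv H x * 1 / H x) = 2 * pi * \<i> * of_nat (num_zeros h (ball 0 1))"
  proof -
    have "contour_integral \<gamma> (\<lambda>x. deriv H x * 1 / H x) =
          2 * pi * \<i> * (\<Sum>p\<in>{w\<in>S. H w = 0 \<or> w \<in> {}}. winding_number \<gamma> p * 1 * zorder H p)"
      by (rule argument_principle[OF oS cS _ _ vp loop _ homo])
         (use HS fin1 pim sphS Hs in \<open>auto simp: pz1_def\<close>)
    then show ?thesis using N1 by (simp add: pz1_def)
  qed
  have AP2: "contour_integral \<gamma> (\<lambda>x. deriv (deriv H) x * 1 / deriv H x) = 2 * pi * \<i> * of_nat (num_zeros (deriv h) (ball 0 1))"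
  proof -
    have "contour_integral \<gamma> (\<lambda>x. deriv (deriv H) x * 1 / deriv H x) =
          2 * pi * \<i> * (\<Sum>p\<in>{w\<in>S. deriv H w = 0 \<or> w \<in> {}}. winding_number \<gamma> p * 1 * zorder (deriv H) p)"
      by (rule argument_principle[OF oS cS _ _ vp loop _ homo])
         (use dHS fin2 pim sphS sphT Tprops in \<open>auto simp: pz2_def\<close>)
    then show ?thesis using N2 by (simp add: pz2_def)
  qed
  define T' where "T' = T \<inter> S"
  have oT': "open T'" using oT oS by (auto simp: T'_def)
  have pimT': "path_image \<gamma> \<subseteq> T'" using pim sphT sphS by (auto simp: T'_def)
  define F where "F = (\<lambda>x. 1/x + deriv (deriv H) x / deriv H x - deriv H x / H x)"
  have prim: "((\<lambda>z. Ln (\<phi> z)) has_field_derivative F x) (at x within T')" if xT': "x \<in> T'" for x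
  proof -
    have xT: "x \<in> T" and xS: "x \<in> S" using xT' by (auto simp: T'_def)
    have Hx: "H x \<noteq> 0" and dHx: "deriv H x \<noteq> 0" and x0: "x \<noteq> 0" and re: "0 < Re (\<phi> x)"
      using Tprops[OF xT] by auto
    have d1: "(H has_field_derivative deriv H x) (at x)" using holomorphic_derivI[OF HS oS xS] .
    have d2: "(deriv H has_field_derivative deriv (deriv H) x) (at x)" using holomorphic_derivI[OF dHS oS xS] .
    have d3: "(\<phi> has_field_derivative ((1 * deriv H x + deriv (deriv H) x * x) * H x - x * deriv H x * deriv H x) / (H x * H x)) (at x)"
      unfolding \<phi>_def by (rule DERIV_divide[OF DERIV_mult[OF DERIV_ident d2] d1 Hx])
    have "((\<lambda>z. Ln (\<phi> z)) has_field_derivative inverse (\<phi> x) * (((1 * deriv H x + deriv (deriv H) x * x) * H x - x * deriv H x * deriv H x) / (H x * H x))) (at x)"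
      by (rule Ln_comp_deriv[OF d3 re])
    then have "((\<lambda>z. Ln (\<phi> z)) has_field_derivative F x) (at x)"
      by (rule DERIV_cong) (use Hx dHx x0 in \<open>simp add: \<phi>_def F_def field_simps\<close>)
    then show ?thesis by (rule has_field_derivative_at_within)
  qed
  have I0: "(F has_contour_integral 0) \<gamma>"
    by (rule Cauchy_theorem_primitive[OF prim vp pimT' loop])
  have c1: "(\<lambda>x. deriv H x / H x) contour_integrable_on \<gamma>"
  proof -
    have "(\<lambda>x. deriv H x / H x) holomorphic_on T'"
      using holomorphic_on_subset[OF HS] holomorphic_on_subset[OF dHS] Tprops oT'
      by (intro holomorphic_intros) (auto simp: T'_def)
    then have "continuous_on (path_image \<gamma>) (\<lambda>x. deriv H x / H x)"
      using pimT' holomorphic_on_imp_continuous_on continuous_on_subset by blast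
    then show ?thesis unfolding \<gamma>_def by (rule contour_integrable_continuous_circlepath)
  qed
  have c0: "((\<lambda>x. 1/x) has_contour_integral (2 * pi * \<i>)) \<gamma>"
  proof -
    have "continuous_on (path_image \<gamma>) (\<lambda>x::complex. 1/x)"
      using pim by (intro continuous_intros) auto
    then have int: "(\<lambda>x::complex. 1/x) contour_integrable_on \<gamma>"
      unfolding \<gamma>_def by (rule contour_integrable_continuous_circlepath)
    have "contour_integral (circlepath 0 1) (\<lambda>u. (\<lambda>_. 1::complex) u / (u - 0) ^ Suc 0) =
          2 * pi * \<i> * (deriv ^^ 0) (\<lambda>_. 1) 0 / fact 0"
      by (rule Cauchy_contour_integral_circlepath) auto
    then have "contour_integral \<gamma> (\<lambda>x. 1/x) = 2 * pi * \<i>" by (simp add: \<gamma>_def)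
    then show ?thesis using has_contour_integral_integral[OF int] by simp
  qed
  have "((\<lambda>x. F x - 1/x + deriv H x / H x) has_contour_integral
          (0 - 2 * pi * \<i> + contour_integral \<gamma> (\<lambda>x. deriv H x / H x))) \<gamma>"
    by (intro has_contour_integral_add has_contour_integral_diff I0 c0 has_contour_integral_integral c1)
  moreover have "(\<lambda>x. F x - 1/x + deriv H x / H x) = (\<lambda>x. deriv (deriv H) x * 1 / deriv H x)"
    by (auto simp: F_def)
  ultimately have "contour_integral \<gamma> (\<lambda>x. deriv (deriv H) x * 1 / deriv H x) =
          0 - 2 * pi * \<i> + contour_integral \<gamma> (\<lambda>x. deriv H x / H x)"
    by (metis contour_integral_unique)
  then have "2 * pi * \<i> * of_nat (num_zeros (deriv h) (ball 0 1)) =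
             2 * pi * \<i> * (of_nat (num_zeros h (ball 0 1)) - 1)"
    using AP1 AP2 by (simp add: algebra_simps)
  then have "(of_nat (num_zeros (deriv h) (ball 0 1)) :: complex) = of_nat (num_zeros h (ball 0 1)) - 1"
    by simp
  then have "(of_nat (num_zeros (deriv h) (ball 0 1) + 1) :: complex) = of_nat (num_zeros h (ball 0 1))"
    by simp
  then show ?thesis by (simp only: of_nat_eq_iff)
qed


lemma disc_thm:
  assumes "Pd h C" "\<not> h constant_on ball 0 1"
  shows "num_zeros h (ball 0 1) = num_zeros (deriv h) (ball 0 1) + 1"
  using count_Qs[OF _ disc_Qs[OF assms]] assms(1) unfolding Pd_def by blast

lemma transfer:
  assumes F1: "F1 holomorphic_on D" and oD: "open D" and cD: "connected D"
    and nzF: "\<exists>w\<in>D. F1 w \<noteq> 0"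
    and \<psi>h: "\<psi> holomorphic_on ball 0 1" and inj: "inj_on \<psi> (ball 0 1)"
    and img: "\<psi> ` ball 0 1 = D"
    and uh: "u holomorphic_on ball 0 1" and unz: "\<And>z. z \<in> ball 0 1 \<Longrightarrow> u z \<noteq> 0"
    and G1: "G1 holomorphic_on ball 0 1" and eq: "\<And>z. z \<in> ball 0 1 \<Longrightarrow> G1 z = F1 (\<psi> z) * u z"
  shows "num_zeros G1 (ball 0 1) = num_zeros F1 D"
proof -
  obtain w where w: "w \<in> D" "F1 w \<noteq> 0" using nzF by blast
  then obtain z0 where z0: "z0 \<in> ball 0 1" "\<psi> z0 = w" using img by blast
  have G1z0: "G1 z0 \<noteq> 0" using eq[OF z0(1)] unz[OF z0(1)] z0 w by simp
  have an: "g analytic_on {z}" if "g holomorphic_on A" "open A" "z \<in> A" for g A z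
    using that analytic_at by blast
  define Z where "Z = {z\<in>ball 0 1. G1 z = 0}"
  have ZF: "Z = {z\<in>ball 0 1. F1 (\<psi> z) = 0}" using eq unz by (auto simp: Z_def)
  have imgZ: "\<psi> ` Z = {w\<in>D. F1 w = 0}" using img unfolding ZF by auto
  have injZ: "inj_on \<psi> Z" using inj by (rule inj_on_subset) (auto simp: Z_def)
  have pt: "zero_multiplicity G1 z = zero_multiplicity F1 (\<psi> z)" if z: "z \<in> ball 0 1" for z
  proof -
    have \<psi>z: "\<psi> z \<in> D" using img z by blast
    have ev: "eventually (\<lambda>x. G1 x = F1 (\<psi> x) * u x) (at z)"
      using eq z by (intro eventually_at_in_open'[THEN eventually_mono, of "ball 0 1"]) auto
    have nzG: "eventually (\<lambda>x. G1 x \<noteq> 0) (at z)"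
      using non_zero_neighbour_alt[OF G1 open_ball connected_ball z z0(1) G1z0] by (auto elim: eventually_mono)
    have nzF1: "eventually (\<lambda>x. F1 x \<noteq> 0) (at (\<psi> z))"
      using non_zero_neighbour_alt[OF F1 oD cD \<psi>z w] by (auto elim: eventually_mono)
    have evinj: "eventually (\<lambda>x. \<psi> x \<noteq> \<psi> z) (at z)"
    proof -
      have "eventually (\<lambda>x. x \<in> ball 0 1) (at z)" using z by (intro eventually_at_in_open') auto
      moreover have "eventually (\<lambda>x. x \<noteq> z) (at z)" by (rule eventually_neq_at_within)
      ultimately show ?thesis
        by eventually_elim (use inj z in \<open>auto simp: inj_on_def\<close>)
    qed
    have F1an: "F1 analytic_on {\<psi> z}" by (rule an[OF F1 oD \<psi>z])
    have \<psi>an: "\<psi> analytic_on {z}" by (rule an[OF \<psi>h open_ball z])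
    have o1: "zorder (\<lambda>x. \<psi> x - \<psi> z) z = 1"
    proof (rule zorder_zero_eqI[of _ "ball 0 1"])
      show "(\<lambda>x. \<psi> x - \<psi> z) holomorphic_on ball 0 1" using \<psi>h by (intro holomorphic_intros)
      have "(\<psi> has_field_derivative deriv \<psi> z) (at z)" using holomorphic_derivI[OF \<psi>h open_ball z] .
      then have "((\<lambda>x. \<psi> x - \<psi> z) has_field_derivative deriv \<psi> z) (at z)"
        by (auto intro!: derivative_eq_intros)
      then have "deriv (\<lambda>x. \<psi> x - \<psi> z) z = deriv \<psi> z" by (rule DERIV_imp_deriv)
      moreover have "deriv \<psi> z \<noteq> 0" by (rule holomorphic_injective_imp_regular[OF \<psi>h open_ball inj z])
      ultimately show "(deriv ^^ nat 1) (\<lambda>x. \<psi> x - \<psi> z) z \<noteq> 0" by simp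
    qed (use z in auto)
    have "zorder G1 z = zorder (\<lambda>x. F1 (\<psi> x) * u x) z" by (rule zorder_cong[OF ev refl])
    also have "\<dots> = zorder (F1 \<circ> \<psi>) z + zorder u z"
      unfolding comp_def
    proof (rule zorder_times_analytic)
      show "(\<lambda>x. F1 (\<psi> x)) analytic_on {z}"
        using analytic_on_compose[OF \<psi>an, of F1] F1an by (simp add: comp_def)
      show "u analytic_on {z}" by (rule an[OF uh open_ball z])
      show "\<forall>\<^sub>F x in at z. F1 (\<psi> x) * u x \<noteq> 0" using ev nzG by eventually_elim auto
    qed
    also have "zorder u z = 0" by (rule zorder_eq_0I[OF an[OF uh open_ball z] unz[OF z]])
    also have "zorder (F1 \<circ> \<psi>) z = zorder F1 (\<psi> z) * zorder (\<lambda>x. \<psi> x - \<psi> z) z"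
      by (rule zorder_compose'[OF isolated_singularity_at_analytic[OF F1an] not_essential_analytic[OF F1an] \<psi>an nzF1 evinj])
    finally have "zorder G1 z = zorder F1 (\<psi> z)" using o1 by simp
    moreover have "zorder G1 z = int (zero_multiplicity G1 z)"
      by (rule zm_zorder[OF G1 open_ball connected_ball z]) (use z0 G1z0 in blast)
    moreover have "zorder F1 (\<psi> z) = int (zero_multiplicity F1 (\<psi> z))"
      by (rule zm_zorder[OF F1 oD cD \<psi>z]) (use w in blast)
    ultimately show ?thesis by simp
  qed
  have "num_zeros F1 D = (\<Sum>w\<in>\<psi> ` Z. zero_multiplicity F1 w)"
    by (simp add: num_zeros_def imgZ)
  also have "\<dots> = (\<Sum>z\<in>Z. zero_multiplicity F1 (\<psi> z))"
    by (rule sum.reindex[OF injZ, unfolded comp_def])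
  also have "\<dots> = (\<Sum>z\<in>Z. zero_multiplicity G1 z)"
    by (rule sum.cong[OF refl]) (use pt in \<open>auto simp: Z_def\<close>)
  also have "\<dots> = num_zeros G1 (ball 0 1)" by (simp add: num_zeros_def Z_def)
  finally show ?thesis by simp
qed



theorem mainTheorem1:
  fixes \<gamma> :: "real \<Rightarrow> complex" and f :: "complex \<Rightarrow> complex" and S :: "complex set"
    and C :: real
  assumes "simple_path \<gamma>" and "pathfinish \<gamma> = pathstart \<gamma>"
    and "open S" and "inside (path_image \<gamma>) \<union> path_image \<gamma> \<subseteq> S"
    and "f holomorphic_on S"
    and "\<not> f constant_on (inside (path_image \<gamma>) \<union> path_image \<gamma>)"
    and "\<And>z. z \<in> path_image \<gamma> \<Longrightarrow> norm (f z) = C"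
  shows "num_zeros f (inside (path_image \<gamma>)) = num_zeros (deriv f) (inside (path_image \<gamma>)) + 1"
proof -
  note sp = assms(1) and loop = assms(2) and oS = assms(3) and KS = assms(4) and fS = assms(5)
    and nc = assms(6) and bd = assms(7)
  define \<Gamma> where "\<Gamma> = path_image \<gamma>"
  define D where "D = inside \<Gamma>"
  define K where "K = D \<union> \<Gamma>"
  have J: "D \<noteq> {}" "open D" "connected D" "bounded D" "frontier D = \<Gamma>"
    using Jordan_inside_outside[OF sp loop] by (auto simp: D_def \<Gamma>_def)
  have clD: "closure D = K" using J(2,5) closure_Un_frontier[of D] interior_open[OF J(2)]
    by (simp add: K_def)
  have cK: "compact K" using J(4) clD by (metis bounded_closure closed_closure compact_eq_bounded_closed)
  have KS': "K \<subseteq> S" using KS by (simp add: K_def D_def \<Gamma>_def)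
  have fD: "f holomorphic_on D" using fS KS' by (auto simp: K_def intro: holomorphic_on_subset)
  have fK: "continuous_on K f"
    using holomorphic_on_imp_continuous_on[OF fS] KS' continuous_on_subset by blast
  have ncD: False if "\<And>w. w \<in> D \<Longrightarrow> f w = c" for c
  proof -
    have "\<forall>x\<in>K. f x = c"
      using continuous_constant_on_closure[of D f c] fK that clD by auto
    then show False using nc unfolding constant_on_def by (auto simp: K_def D_def \<Gamma>_def)
  qed
  have scD: "simply_connected D" using simply_connected_inside_simple_path[OF sp] by (simp add: D_def \<Gamma>_def)
  have DU: "D \<noteq> UNIV" using J(4) not_bounded_UNIV by metis
  obtain \<phi> \<psi> where \<phi>h: "\<phi> holomorphic_on D" and \<psi>h: "\<psi> holomorphic_on ball 0 1"
    and \<phi>\<psi>: "\<forall>z\<in>D. \<phi> z \<in> ball 0 1 \<and> \<psi> (\<phi> z) = z"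
    and \<psi>\<phi>: "\<forall>z\<in>ball 0 1. \<psi> z \<in> D \<and> \<phi> (\<psi> z) = z"
    using Riemann_mapping_theorem[of D] J(1,2) scD DU by blast
  have inj: "inj_on \<psi> (ball 0 1)" by (metis \<psi>\<phi> inj_on_def)
  have img: "\<psi> ` ball 0 1 = D"
  proof
    show "\<psi> ` ball 0 1 \<subseteq> D" using \<psi>\<phi> by auto
    show "D \<subseteq> \<psi> ` ball 0 1" using \<phi>\<psi> by (metis image_eqI subsetI)
  qed
  define h where "h = (\<lambda>z. f (\<psi> z))"
  have hh: "h holomorphic_on ball 0 1"
    using holomorphic_on_compose_gen[OF \<psi>h fD] img by (simp add: h_def comp_def)
  have lim: "((\<lambda>z. norm (h z)) \<longlongrightarrow> C) bdry"
  proof (rule tendstoI)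
    fix e :: real assume e: "e > 0"
    define A where "A = K \<inter> (\<lambda>x. norm (f x)) -` {y. e \<le> \<bar>y - C\<bar>}"
    have "closed A" unfolding A_def
      by (intro continuous_closed_preimage continuous_on_norm fK compact_imp_closed cK closed_Collect_le continuous_intros)
    then have "compact (K \<inter> A)" by (rule compact_Int_closed[OF cK])
    moreover have "K \<inter> A = A" by (auto simp: A_def)
    ultimately have cA: "compact A" by simp
    have AD: "A \<subseteq> D"
    proof
      fix x assume "x \<in> A"
      then have "x \<in> K" "e \<le> \<bar>norm (f x) - C\<bar>" by (auto simp: A_def)
      moreover have "x \<notin> \<Gamma>" using bd e calculation(2) by (fastforce simp: \<Gamma>_def)
      ultimately show "x \<in> D" by (simp add: K_def)
    qed
    have c\<phi>A: "compact (\<phi> ` A)"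
      by (rule compact_continuous_image[OF continuous_on_subset[OF holomorphic_on_imp_continuous_on[OF \<phi>h] AD] cA])
    have \<phi>A: "\<phi> ` A \<subseteq> ball 0 1" using \<phi>\<psi> AD by auto
    obtain \<rho> where \<rho>: "\<rho> < 1" "\<And>y. y \<in> \<phi> ` A \<Longrightarrow> norm y \<le> \<rho>"
    proof (cases "A = {}")
      case True then show ?thesis using that[of 0] by auto
    next
      case False
      have "compact (norm ` \<phi> ` A)"
        by (rule compact_continuous_image[OF continuous_on_norm_id c\<phi>A])
      then obtain s where s: "s \<in> norm ` \<phi> ` A" "\<And>t. t \<in> norm ` \<phi> ` A \<Longrightarrow> t \<le> s"
        using compact_attains_sup[of "norm ` \<phi> ` A"] False by blast
      have "s < 1" using s(1) \<phi>A by auto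
      then show ?thesis using that[of s] s(2) by blast
    qed
    show "eventually (\<lambda>z. dist (norm (h z)) C < e) bdry"
      unfolding ev_bdry
    proof (rule exI[of _ \<rho>], intro conjI \<rho>(1) allI impI)
      fix z :: complex assume z: "\<rho> < norm z" "norm z < 1"
      then have zb: "z \<in> ball 0 1" by simp
      have "\<psi> z \<notin> A"
      proof
        assume "\<psi> z \<in> A"
        then have "\<phi> (\<psi> z) \<in> \<phi> ` A" by blast
        then have "norm z \<le> \<rho>" using \<rho>(2) \<psi>\<phi> zb by metis
        then show False using z by simp
      qed
      moreover have "\<psi> z \<in> K" using \<psi>\<phi> zb by (auto simp: K_def)
      ultimately have "\<bar>norm (f (\<psi> z)) - C\<bar> < e" by (auto simp: A_def)
      then show "dist (norm (h z)) C < e" by (simp add: h_def dist_real_def)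
    qed
  qed
  have hnc: "\<not> h constant_on ball 0 1"
  proof
    assume "h constant_on ball 0 1"
    then obtain c where c: "\<And>z. z \<in> ball 0 1 \<Longrightarrow> h z = c" unfolding constant_on_def by blast
    have "f w = c" if "w \<in> D" for w
      using c[of "\<phi> w"] \<phi>\<psi> that by (simp add: h_def)
    then show False using ncD by blast
  qed
  have hnz: "\<exists>z\<in>ball 0 1. h z \<noteq> 0"
    using hnc unfolding constant_on_def by blast
  have P: "Pd h C" unfolding Pd_def using hh lim hnz by blast
  have main: "num_zeros h (ball 0 1) = num_zeros (deriv h) (ball 0 1) + 1"
    by (rule disc_thm[OF P hnc])
  have fnz: "\<exists>w\<in>D. f w \<noteq> 0" using ncD[of 0] by blast
  have t1: "num_zeros h (ball 0 1) = num_zeros f D"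
    by (rule transfer[OF fD J(2,3) fnz \<psi>h inj img, of "\<lambda>_. 1"]) (use hh in \<open>auto simp: h_def\<close>)
  have dfD: "deriv f holomorphic_on D" by (rule holomorphic_deriv[OF fD J(2)])
  have dfnz: "\<exists>w\<in>D. deriv f w \<noteq> 0"
  proof (rule ccontr)
    assume "\<not> ?thesis"
    then have "\<forall>x\<in>D - {}. DERIV f x :> 0"
      using holomorphic_derivI[OF fD J(2)] by fastforce
    then obtain c where "\<And>x. x \<in> D \<Longrightarrow> f x = c"
      using DERIV_zero_connected_constant[OF J(3) J(2) finite.emptyI holomorphic_on_imp_continuous_on[OF fD]]
      by blast
    then show False using ncD by blast
  qed
  have dh: "deriv h z = deriv f (\<psi> z) * deriv \<psi> z" if z: "z \<in> ball 0 1" for z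
  proof -
    have \<psi>z: "\<psi> z \<in> D" using img z by blast
    have "(h has_field_derivative deriv f (\<psi> z) * deriv \<psi> z) (at z)"
      unfolding h_def
      by (rule DERIV_chain2[OF holomorphic_derivI[OF fD J(2) \<psi>z] holomorphic_derivI[OF \<psi>h open_ball z]])
    then show ?thesis by (rule DERIV_imp_deriv)
  qed
  have t2: "num_zeros (deriv h) (ball 0 1) = num_zeros (deriv f) D"
  proof (rule transfer[OF dfD J(2,3) dfnz \<psi>h inj img])
    show "deriv \<psi> holomorphic_on ball 0 1" by (rule holomorphic_deriv[OF \<psi>h open_ball])
    show "\<And>z. z \<in> ball 0 1 \<Longrightarrow> deriv \<psi> z \<noteq> 0"
      by (rule holomorphic_injective_imp_regular[OF \<psi>h open_ball inj])
    show "deriv h holomorphic_on ball 0 1" by (rule holomorphic_deriv[OF hh open_ball])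
  qed (rule dh)
  show ?thesis using main t1 t2 by (simp add: D_def \<Gamma>_def)
qed

end
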